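(* Let $n\ge 1$, $V=\mathbb F_2^n$, $\rho\in\mathrm{Sym}(V)\setminus\mathrm{AGL}(V)$ and $\theta\in\mathrm{GL}(V)$. Define $\overline\rho,\overline\theta\in\mathrm{Sym}(V\times V)$ by $$(x,y)\overline\rho=(x+y,\ y+(x+y)\rho),\qquad (x,y)\overline\theta=((x+y)\theta,\ y).$$ If the group $\langle \rho, T_n\rangle\le \mathrm{Sym}(V)$ is primitive on $V$, then the group $\Gamma(\mathrm{LM}(\rho,\theta))=\langle \overline\rho,\overline\theta,T_{2n}\rangle\le\mathrm{Sym}(V\times V)$ is primitive on $V\times V$ (indeed already $\langle\overline\rho,T_{2n}\rangle$ is primitive).
   Context: Maps act on the right: $x\rho$ is the image of $x$ under $\rho$ and $fg$ means first $f$ then $g$. $T_n$ is the group of translations $\sigma_v:x\mapsto x+v$ ($v\in V$) of $V$, and $T_{2n}$ is the group of translations $\sigma_{(v,w)}:(x,y)\mapsto(x+v,y+w)$ of $V\times V$. $\mathrm{AGL}(V)$ is the group of affine permutations of $V$ and $\mathrm{GL}(V)$ the group of linear ones. A group $G$ acting on a set $M$ is primitive if it is transitive and there is no $G$-invariant partition of $M$ other than $\{M\}$ and the partition into singletons. The round functions of the Lai–Massey cipher $\mathrm{LM}(\rho,\theta)$ are $\overline\rho\,\overline\theta\,\sigma_{(k\theta,k)}$ for round keys $k\in V$, i.e. $(x,y)\mapsto((x+(x+y)\rho+k)\theta,\ y+(x+y)\rho+k)$, so $\Gamma(\mathrm{LM}(\rho,\theta))$ contains the group generated by these round functions. *)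

theory Defs
  imports "HOL-Analysis.Analysis" "HOL-Library.Z2"
begin

text \<open>V = F_2^n is modelled as the type bit ^ 'n for a finite index type 'n
 (so n = CARD('n) >= 1 automatically).\<close>

inductive_set gen_group :: "('a \<Rightarrow> 'a) set \<Rightarrow> ('a \<Rightarrow> 'a) set" for S where
  gen_id: "id \<in> gen_group S"
| gen_gen: "s \<in> S \<Longrightarrow> s \<in> gen_group S"
| gen_inv: "s \<in> S \<Longrightarrow> inv s \<in> gen_group S"
| gen_comp: "f \<in> gen_group S \<Longrightarrow> g \<in> gen_group S \<Longrightarrow> f \<circ> g \<in> gen_group S"

definition transitive_on :: "('a \<Rightarrow> 'a) set \<Rightarrow> 'a set \<Rightarrow> bool" where
  "transitive_on G M \<longleftrightarrow> (\<forall>x\<in>M. \<forall>y\<in>M. \<exists>g\<in>G. g x = y)"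

definition invariant_partition :: "('a \<Rightarrow> 'a) set \<Rightarrow> 'a set \<Rightarrow> 'a set set \<Rightarrow> bool" where
  "invariant_partition G M P \<longleftrightarrow>
     (\<forall>B\<in>P. B \<noteq> {} \<and> B \<subseteq> M) \<and> \<Union>P = M \<and>
     (\<forall>B\<in>P. \<forall>C\<in>P. B \<noteq> C \<longrightarrow> B \<inter> C = {}) \<and>
     (\<forall>g\<in>G. \<forall>B\<in>P. g ` B \<in> P)"

definition primitive_on :: "('a \<Rightarrow> 'a) set \<Rightarrow> 'a set \<Rightarrow> bool" where
  "primitive_on G M \<longleftrightarrow> transitive_on G M \<and>
     (\<forall>P. invariant_partition G M P \<longrightarrow> P = {M} \<or> P = (\<lambda>x. {x}) ` M)"

definition GL :: "(bit ^ 'n \<Rightarrow> bit ^ 'n) set" where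
  "GL = {A. Vector_Spaces.linear (*s) (*s) A \<and> bij A}"

definition AGL :: "(bit ^ 'n \<Rightarrow> bit ^ 'n) set" where
  "AGL = {f. \<exists>A\<in>GL. \<exists>b. f = (\<lambda>x. A x + b)}"

definition Tn :: "(bit ^ 'n \<Rightarrow> bit ^ 'n) set" where
  "Tn = {(\<lambda>x. x + v) | v. True}"

definition T2n :: "((bit ^ 'n) \<times> (bit ^ 'n) \<Rightarrow> (bit ^ 'n) \<times> (bit ^ 'n)) set" where
  "T2n = {(\<lambda>(x, y). (x + v, y + w)) | v w. True}"

definition rho_bar :: "(bit ^ 'n \<Rightarrow> bit ^ 'n) \<Rightarrow> ((bit ^ 'n) \<times> (bit ^ 'n) \<Rightarrow> (bit ^ 'n) \<times> (bit ^ 'n))" where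
  "rho_bar \<rho> = (\<lambda>(x, y). (x + y, y + \<rho> (x + y)))"

definition theta_bar :: "(bit ^ 'n \<Rightarrow> bit ^ 'n) \<Rightarrow> ((bit ^ 'n) \<times> (bit ^ 'n) \<Rightarrow> (bit ^ 'n) \<times> (bit ^ 'n))" where
  "theta_bar \<theta> = (\<lambda>(x, y). (\<theta> (x + y), y))"

end

theory Submission
  imports Defs
begin


lemma bit_add_self [simp]: "(b::bit) + b = 0"
  by (cases b) auto

lemma vec_add_self [simp]: "(x::bit^'n) + x = 0"
  by (simp add: vec_eq_iff)

lemma vec_uminus [simp]: "- (x::bit^'n) = x"
  by (metis add_minus_cancel add.right_neutral vec_add_self add.commute)

lemma vec_minus [simp]: "(x::bit^'n) - y = x + y"
  by (simp add: diff_conv_add_uminus)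

lemma vec_two [simp]: "2 * (x::bit^'n) = 0"
  by (metis mult_2 vec_add_self)

lemma vec_add_cancel [simp]: "(x::bit^'n) + (x + y) = y"
  by (metis add.assoc add.left_neutral vec_add_self)

lemma affine_of_const:
  fixes \<rho> :: "bit ^ 'n \<Rightarrow> bit ^ 'n"
  assumes "bij \<rho>" and c: "\<And>d x. \<rho> (x + d) + \<rho> x = \<rho> d + \<rho> 0"
  shows "\<rho> \<in> AGL"
proof -
  define A where "A = (\<lambda>x. \<rho> x + \<rho> 0)"
  have add: "A (x + y) = A x + A y" for x y
  proof -
    have "\<rho> (x + y) = \<rho> y + \<rho> 0 + \<rho> x" using c[of x y]
      by (metis add.assoc vec_add_cancel add.commute)
    then show ?thesis unfolding A_def by (simp add: algebra_simps)
  qed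
  have A0: "A 0 = 0" unfolding A_def by simp
  have sc: "A (c *s x) = c *s A x" for c x
    by (cases c) (auto simp: A0)
  have lin: "Vector_Spaces.linear (*s) (*s) A"
    by (rule Vector_Spaces.linear_iff[THEN iffD2]) (use add sc vec.vector_space_axioms in blast)
  have "A = (\<lambda>x. x + \<rho> 0) \<circ> \<rho>" unfolding A_def by auto
  moreover have "bij (\<lambda>x::bit^'n. x + \<rho> 0)"
    by (rule bijI') (auto, metis add.assoc add.right_neutral vec_add_self)
  ultimately have "bij A" using assms(1) by (simp add: bij_comp)
  then have "A \<in> GL" using lin by (simp add: GL_def)
  moreover have "\<rho> = (\<lambda>x. A x + \<rho> 0)" unfolding A_def by (auto simp: add.assoc)
  ultimately show ?thesis unfolding AGL_def by blast
qed


definition subgrp :: "'a::ab_group_add set \<Rightarrow> bool" where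
  "subgrp X \<longleftrightarrow> 0 \<in> X \<and> (\<forall>a\<in>X. \<forall>b\<in>X. a + b \<in> X) \<and> (\<forall>a\<in>X. - a \<in> X)"

definition gcompat :: "('a::ab_group_add \<Rightarrow> 'a) \<Rightarrow> 'a set \<Rightarrow> bool" where
  "gcompat g X \<longleftrightarrow> (\<forall>x. \<forall>u\<in>X. g (x + u) - g x \<in> X)"

definition ceq :: "('a::ab_group_add \<Rightarrow> 'a) \<Rightarrow> 'a set \<Rightarrow> bool" where
  "ceq g X \<longleftrightarrow> (\<forall>x. g ` ((\<lambda>u. x + u) ` X) = (\<lambda>u. g x + u) ` X)"

lemma prim_crit:
  fixes G :: "('a::ab_group_add \<Rightarrow> 'a) set"
  assumes tr: "\<And>v. (\<lambda>x. x + v) \<in> G"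
    and crit: "\<And>X. subgrp X \<Longrightarrow> (\<forall>g\<in>G. gcompat g X) \<Longrightarrow> X = {0} \<or> X = UNIV"
  shows "primitive_on G UNIV"
  unfolding primitive_on_def
proof (intro conjI allI impI)
  show "transitive_on G UNIV"
    unfolding transitive_on_def
  proof (intro ballI)
    fix x y :: 'a
    show "\<exists>g\<in>G. g x = y" by (rule bexI[OF _ tr[of "y - x"]]) simp
  qed
next
  fix P assume P: "invariant_partition G UNIV P"
  have Pc: "(\<forall>B\<in>P. B \<noteq> {} \<and> B \<subseteq> UNIV) \<and> \<Union>P = UNIV \<and>
     (\<forall>B\<in>P. \<forall>C\<in>P. B \<noteq> C \<longrightarrow> B \<inter> C = {}) \<and>
     (\<forall>g\<in>G. \<forall>B\<in>P. g ` B \<in> P)" using P unfolding invariant_partition_def .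
  have ne: "\<And>B. B \<in> P \<Longrightarrow> B \<noteq> {}" using Pc by simp
  have cov: "\<Union>P = UNIV" using Pc by simp
  have dis: "\<And>B C. B \<in> P \<Longrightarrow> C \<in> P \<Longrightarrow> B \<noteq> C \<Longrightarrow> B \<inter> C = {}"
    using Pc by simp
  have inv: "\<And>g B. g \<in> G \<Longrightarrow> B \<in> P \<Longrightarrow> g ` B \<in> P" using Pc by simp
  have same: "B = C" if "B \<in> P" "C \<in> P" "z \<in> B" "z \<in> C" for B C z
    using dis[OF that(1,2)] that(3,4) by blast
  have "(0::'a) \<in> \<Union>P" by (simp add: cov)
  then obtain B0 where B0: "B0 \<in> P" "0 \<in> B0" by (rule UnionE)
  have T: "(\<lambda>z. z + v) ` B \<in> P" if "B \<in> P" for B v using inv[OF tr that] .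
  have sg: "subgrp B0"
    unfolding subgrp_def
  proof (intro conjI ballI)
    show "0 \<in> B0" by (rule B0)
  next
    fix a b assume a: "a \<in> B0" and b: "b \<in> B0"
    have "b \<in> (\<lambda>z. z + b) ` B0" by (rule image_eqI[of _ _ 0]) (simp_all add: B0)
    then have "(\<lambda>z. z + b) ` B0 = B0"
      using same[OF T[OF B0(1)] B0(1), of b] b by blast
    then show "a + b \<in> B0" using a by blast
  next
    fix a assume a: "a \<in> B0"
    have "0 \<in> (\<lambda>z. z + - a) ` B0" by (rule image_eqI[of _ _ a]) (simp_all add: a)
    then have e: "(\<lambda>z. z + - a) ` B0 = B0"
      using same[OF T[OF B0(1)] B0(1), of 0] B0(2) by blast
    have "- a \<in> (\<lambda>z. z + - a) ` B0" by (rule image_eqI[of _ _ 0]) (simp_all add: B0)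
    then show "- a \<in> B0" using e by simp
  qed
  have cp: "gcompat g B0" if g: "g \<in> G" for g
    unfolding gcompat_def
  proof (intro allI ballI)
    fix x u assume u: "u \<in> B0"
    define B3 where "B3 = (\<lambda>z. z + - g x) ` (g ` ((\<lambda>z. z + x) ` B0))"
    have B3P: "B3 \<in> P" unfolding B3_def by (rule T, rule inv[OF g], rule T, rule B0(1))
    have "x \<in> (\<lambda>z. z + x) ` B0" by (rule image_eqI[of _ _ 0]) (simp_all add: B0)
    then have "0 \<in> B3" unfolding B3_def by (rule image_eqI[rotated, OF imageI]) simp
    then have B3e: "B3 = B0" using same[OF B3P B0(1)] B0(2) by blast
    have "u + x \<in> (\<lambda>z. z + x) ` B0" using u by (rule imageI)
    then have "g (x + u) - g x \<in> B3" unfolding B3_def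
      by (intro image_eqI[rotated, OF imageI]) (simp_all add: add.commute)
    then show "g (x + u) - g x \<in> B0" using B3e by simp
  qed
  from crit[OF sg] cp have "B0 = {0} \<or> B0 = UNIV" by blast
  then show "P = {UNIV} \<or> P = (\<lambda>x. {x}) ` UNIV"
  proof
    assume h: "B0 = UNIV"
    have allU: "B = UNIV" if BP: "B \<in> P" for B
    proof -
      obtain b where "b \<in> B" using ne[OF BP] by blast
      then show ?thesis using same[OF BP B0(1), of b] h by blast
    qed
    have "P = {UNIV}"
    proof
      show "P \<subseteq> {UNIV}" using allU by blast
      show "{UNIV} \<subseteq> P" using B0(1) h by simp
    qed
    then show ?thesis by simp
  next
    assume h: "B0 = {0}"
    have sing: "\<exists>b. B = {b}" if BP: "B \<in> P" for B
    proof -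
      obtain b where b: "b \<in> B" using ne[OF BP] by blast
      have "0 \<in> (\<lambda>z. z + - b) ` B" by (rule image_eqI[of _ _ b]) (simp_all add: b)
      then have "(\<lambda>z. z + - b) ` B = B0"
        using same[OF T[OF BP] B0(1), of 0] B0(2) by blast
      then have im: "(\<lambda>z. z + - b) ` B = {0}" using h by simp
      have "\<forall>c\<in>B. c = b"
      proof
        fix c assume "c \<in> B"
        then have "c + - b \<in> (\<lambda>z. z + - b) ` B" by (rule imageI)
        then have "c + - b = 0" using im by simp
        then show "c = b" by (simp add: add_eq_0_iff2 eq_neg_iff_add_eq_0)
      qed
      then show ?thesis using b by blast
    qed
    have "P = (\<lambda>x. {x}) ` UNIV"
    proof
      show "P \<subseteq> (\<lambda>x. {x}) ` UNIV" using sing by blast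
      show "(\<lambda>x. {x}) ` UNIV \<subseteq> P"
      proof
        fix S assume "S \<in> (\<lambda>x. {x}) ` (UNIV::'a set)"
        then obtain x where S: "S = {x}" by blast
        have "x \<in> \<Union>P" by (simp add: cov)
        then obtain B where "B \<in> P" "x \<in> B" by (rule UnionE)
        then show "S \<in> P" using sing S by force
      qed
    qed
    then show ?thesis by blast
  qed
qed

lemma gen_ceq:
  assumes S: "\<And>s. s \<in> S \<Longrightarrow> bij s \<and> ceq s X"
    and g: "g \<in> gen_group S"
  shows "bij g \<and> ceq g X"
  using g
proof (induction rule: gen_group.induct)
  case gen_id then show ?case by (simp add: ceq_def bij_def)
next
  case (gen_gen s) then show ?case using S by blast
next
  case (gen_inv s)
  have bs: "bij s" and cs: "ceq s X" using S[OF gen_inv] by auto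
  have "ceq (inv s) X" unfolding ceq_def
  proof
    fix y
    define x where "x = inv s y"
    have sx: "s x = y" unfolding x_def using bs by (simp add: bij_is_surj surj_f_inv_f)
    have "inv s ` ((\<lambda>u. y + u) ` X) = inv s ` (s ` ((\<lambda>u. x + u) ` X))"
      using cs sx unfolding ceq_def by metis
    also have "\<dots> = (\<lambda>u. x + u) ` X"
      using bs by (simp add: bij_is_inj image_inv_f_f)
    finally show "inv s ` ((\<lambda>u. y + u) ` X) = (\<lambda>u. inv s y + u) ` X"
      unfolding x_def .
  qed
  then show ?case using bs by (simp add: bij_imp_bij_inv)
next
  case (gen_comp f g)
  have "bij (f \<circ> g)" using gen_comp by (simp add: bij_comp)
  moreover have "ceq (f \<circ> g) X" unfolding ceq_def
  proof
    fix x
    have "(f \<circ> g) ` ((\<lambda>u. x + u) ` X) = f ` (g ` ((\<lambda>u. x + u) ` X))" by (simp add: image_comp)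
    also have "\<dots> = f ` ((\<lambda>u. g x + u) ` X)" using gen_comp unfolding ceq_def by simp
    also have "\<dots> = (\<lambda>u. (f \<circ> g) x + u) ` X" using gen_comp unfolding ceq_def by simp
    finally show "(f \<circ> g) ` ((\<lambda>u. x + u) ` X) = (\<lambda>u. (f \<circ> g) x + u) ` X" .
  qed
  ultimately show ?case by blast
qed

lemma coset_part:
  fixes X :: "'a::ab_group_add set"
  assumes sg: "subgrp X" and c: "\<And>g. g \<in> G \<Longrightarrow> ceq g X"
  shows "invariant_partition G UNIV (range (\<lambda>x. (\<lambda>u. x + u) ` X))"
  unfolding invariant_partition_def
proof (intro conjI ballI impI)
  fix B assume "B \<in> range (\<lambda>x. (\<lambda>u. x + u) ` X)"
  then obtain x where "B = (\<lambda>u. x + u) ` X" by blast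
  moreover have "x + 0 \<in> (\<lambda>u. x + u) ` X" using sg unfolding subgrp_def by (intro imageI) simp
  ultimately show "B \<noteq> {}" by blast
next
  fix B show "B \<subseteq> UNIV" by simp
next
  show "\<Union> (range (\<lambda>x. (\<lambda>u. x + u) ` X)) = UNIV"
  proof -
    have "x \<in> (\<lambda>u. x + u) ` X" for x
    proof -
      have "x + 0 \<in> (\<lambda>u. x + u) ` X" using sg unfolding subgrp_def by (intro imageI) simp
      then show ?thesis by simp
    qed
    then have "x \<in> \<Union> (range (\<lambda>x. (\<lambda>u. x + u) ` X))" for x by (rule UN_I[OF UNIV_I])
    then show ?thesis by auto
  qed
next
  fix B C assume B: "B \<in> range (\<lambda>x. (\<lambda>u. x + u) ` X)" and C: "C \<in> range (\<lambda>x. (\<lambda>u. x + u) ` X)"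
    and ne: "B \<noteq> C"
  obtain x where x: "B = (\<lambda>u. x + u) ` X" using B by blast
  obtain y where y: "C = (\<lambda>u. y + u) ` X" using C by blast
  have eq: "(\<lambda>u. x + u) ` X = (\<lambda>u. (x + a) + u) ` X" if a: "a \<in> X" for x a
  proof
    show "(\<lambda>u. x + u) ` X \<subseteq> (\<lambda>u. x + a + u) ` X"
    proof
      fix z assume "z \<in> (\<lambda>u. x + u) ` X"
      then obtain u where u: "u \<in> X" "z = x + u" by blast
      have "- a + u \<in> X" using sg a u unfolding subgrp_def by blast
      moreover have "z = x + a + (- a + u)" using u by simp
      ultimately show "z \<in> (\<lambda>u. x + a + u) ` X" by blast
    qed
    show "(\<lambda>u. x + a + u) ` X \<subseteq> (\<lambda>u. x + u) ` X"
    proof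
      fix z assume "z \<in> (\<lambda>u. x + a + u) ` X"
      then obtain u where u: "u \<in> X" "z = x + a + u" by blast
      have "a + u \<in> X" using sg a u unfolding subgrp_def by blast
      moreover have "z = x + (a + u)" using u by (simp add: add.assoc)
      ultimately show "z \<in> (\<lambda>u. x + u) ` X" by blast
    qed
  qed
  show "B \<inter> C = {}"
  proof (rule ccontr)
    assume "B \<inter> C \<noteq> {}"
    then obtain z where "z \<in> B" "z \<in> C" by blast
    then obtain a b where a: "a \<in> X" and b: "b \<in> X" and "x + a = y + b" unfolding x y by auto
    then have "B = (\<lambda>u. (x + a) + u) ` X" "C = (\<lambda>u. (y + b) + u) ` X"
      using eq x y by blast+
    then have "B = C" using \<open>x + a = y + b\<close> by simp
    then show False using ne by simp
  qed
next
  fix g B assume g: "g \<in> G" and B: "B \<in> range (\<lambda>x. (\<lambda>u. x + u) ` X)"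
  then obtain x where x: "B = (\<lambda>u. x + u) ` X" by blast
  then show "g ` B \<in> range (\<lambda>x. (\<lambda>u. x + u) ` X)" using c[OF g] unfolding ceq_def by auto
qed

lemma prim_imp:
  fixes X :: "'a::ab_group_add set"
  assumes "primitive_on G UNIV" "subgrp X" "\<And>g. g \<in> G \<Longrightarrow> ceq g X"
  shows "X = {0} \<or> X = UNIV"
proof -
  have "range (\<lambda>x. (\<lambda>u. x + u) ` X) = {UNIV} \<or> range (\<lambda>x. (\<lambda>u. x + u) ` X) = (\<lambda>x. {x}) ` UNIV"
  proof -
    have "invariant_partition G UNIV (range (\<lambda>x. (\<lambda>u. x + u) ` X))"
      by (rule coset_part[OF assms(2,3)])
    then show ?thesis using assms(1) unfolding primitive_on_def by simp
  qed
  then show ?thesis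
  proof
    assume e: "range (\<lambda>x. (\<lambda>u. x + u) ` X) = {UNIV}"
    have "(\<lambda>u. 0 + u) ` X \<in> range (\<lambda>x. (\<lambda>u. x + u) ` X)" by (rule rangeI)
    then have "(\<lambda>u. 0 + u) ` X = UNIV" unfolding e by simp
    then show ?thesis by simp
  next
    assume h: "range (\<lambda>x. (\<lambda>u. x + u) ` X) = (\<lambda>x. {x}) ` UNIV"
    have "(\<lambda>u. 0 + u) ` X \<in> range (\<lambda>x. (\<lambda>u. x + u) ` X)" by (rule rangeI)
    then have "(\<lambda>u. 0 + u) ` X \<in> (\<lambda>x. {x}) ` UNIV" unfolding h .
    then obtain y where "X = {y}" by auto
    then show ?thesis using assms(2) unfolding subgrp_def by auto
  qed
qed

lemma compat_ceq:
  fixes g :: "'a::{ab_group_add,finite} \<Rightarrow> 'a"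
  assumes "inj g" "gcompat g X"
  shows "ceq g X"
  unfolding ceq_def
proof
  fix x
  have sub: "g ` ((\<lambda>u. x + u) ` X) \<subseteq> (\<lambda>u. g x + u) ` X"
  proof
    fix z assume "z \<in> g ` ((\<lambda>u. x + u) ` X)"
    then obtain u where u: "u \<in> X" "z = g (x + u)" by blast
    then have "g (x + u) - g x \<in> X" using assms(2) unfolding gcompat_def by blast
    moreover have "z = g x + (g (x + u) - g x)" using u by simp
    ultimately show "z \<in> (\<lambda>u. g x + u) ` X" by blast
  qed
  have "card (g ` ((\<lambda>u. x + u) ` X)) = card X"
    using assms(1) by (simp add: card_image inj_on_def)
  also have "\<dots> = card ((\<lambda>u. g x + u) ` X)"
    by (simp add: card_image inj_on_def)
  finally show "g ` ((\<lambda>u. x + u) ` X) = (\<lambda>u. g x + u) ` X"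
    using sub by (simp add: card_subset_eq)
qed



instance bit :: finite
proof
  have "(UNIV :: bit set) = {0, 1}" by (auto intro: bit_not_zero_iff[THEN iffD1])
  then show "finite (UNIV :: bit set)" by (metis finite.emptyI finite_insert)
qed

lemma vec_sum0: "(x::bit^'n) + y = 0 \<Longrightarrow> x = y"
  by (metis vec_add_cancel add.right_neutral)

lemma K:
  fixes \<rho> :: "bit ^ 'n \<Rightarrow> bit ^ 'n"
  assumes sg: "subgrp U" and c: "gcompat (rho_bar \<rho>) U" and u: "(u1, u2) \<in> U"
  shows "(u2, \<rho> (x + (u1 + u2)) + \<rho> x) \<in> U"
proof -
  have "rho_bar \<rho> ((x, 0) + (u1, u2)) - rho_bar \<rho> (x, 0) \<in> U"
    using c u unfolding gcompat_def by blast
  then have "(u1, u2) + (rho_bar \<rho> ((x, 0) + (u1, u2)) - rho_bar \<rho> (x, 0)) \<in> U"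
    using sg u unfolding subgrp_def by blast
  moreover have "(u1, u2) + (rho_bar \<rho> ((x, 0) + (u1, u2)) - rho_bar \<rho> (x, 0))
      = (u2, \<rho> (x + (u1 + u2)) + \<rho> x)"
    by (simp add: rho_bar_def add_ac)
  ultimately show ?thesis by simp
qed

lemma K':
  fixes \<rho> :: "bit ^ 'n \<Rightarrow> bit ^ 'n" and U :: "((bit ^ 'n) \<times> (bit ^ 'n)) set"
  assumes sg: "subgrp U" and c: "gcompat (\<lambda>(p, q). (p + q + \<rho> p, q + \<rho> p)) U" and u: "(u1, u2) \<in> U"
  shows "(u2 + (\<rho> (a + u1) + \<rho> a), \<rho> (a + u1) + \<rho> a) \<in> U"
proof -
  let ?R = "(\<lambda>(p, q). (p + q + \<rho> p, q + \<rho> p)) :: ((bit^'n) \<times> (bit^'n)) \<Rightarrow> _"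
  have "?R ((a, 0) + (u1, u2)) - ?R (a, 0) \<in> U"
    using c u unfolding gcompat_def by blast
  then have "(u1, u2) + (?R ((a, 0) + (u1, u2)) - ?R (a, 0)) \<in> U"
    using sg u unfolding subgrp_def by blast
  moreover have "(u1, u2) + (?R ((a, 0) + (u1, u2)) - ?R (a, 0))
      = (u2 + (\<rho> (a + u1) + \<rho> a), \<rho> (a + u1) + \<rho> a)"
    by (simp add: add_ac)
  ultimately show ?thesis by simp
qed

lemma hyp_inv:
  fixes \<rho> :: "bit ^ 'n \<Rightarrow> bit ^ 'n" and X :: "(bit ^ 'n) set"
  assumes b: "bij \<rho>" and pr: "primitive_on (gen_group (insert \<rho> Tn)) UNIV"
    and sg: "subgrp X" and c: "\<And>x u. u \<in> X \<Longrightarrow> \<rho> (x + u) + \<rho> x \<in> X"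
  shows "X = {0} \<or> X = UNIV"
proof (rule prim_imp[OF pr sg])
  fix g assume g: "g \<in> gen_group (insert \<rho> Tn)"
  have S: "bij s \<and> ceq s X" if s: "s \<in> insert \<rho> Tn" for s
  proof (cases "s = \<rho>")
    case True
    have "gcompat \<rho> X" unfolding gcompat_def using c by simp
    then show ?thesis using True b compat_ceq[of \<rho> X] by (simp add: bij_is_inj)
  next
    case False
    then obtain v where sv: "s = (\<lambda>x. x + v)" using s unfolding Tn_def by blast
    have "bij s" unfolding sv
      by (rule bijI') (auto, metis add.assoc add.right_neutral vec_add_self)
    moreover have "ceq s X" unfolding ceq_def sv image_image
      by (intro allI image_cong) (simp_all add: add_ac)
    ultimately show ?thesis by blast
  qed
  show "ceq g X" using gen_ceq[OF S g] by blast
qed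

lemma core:
  fixes \<rho> :: "bit ^ 'n \<Rightarrow> bit ^ 'n" and U :: "((bit ^ 'n) \<times> (bit ^ 'n)) set"
  assumes b: "bij \<rho>" and na: "\<rho> \<notin> AGL"
    and pr: "primitive_on (gen_group (insert \<rho> Tn)) UNIV"
    and sg: "subgrp U" and c1: "gcompat (rho_bar \<rho>) U"
    and c2: "gcompat (\<lambda>(p, q). (p + q + \<rho> p, q + \<rho> p)) U"
  shows "U = {0} \<or> U = UNIV"
proof (rule ccontr)
  assume nt: "\<not> (U = {0} \<or> U = UNIV)"
  note KK = K[OF sg c1] and KK' = K'[OF sg c2]
  have U0: "(0, 0) \<in> U" using sg unfolding subgrp_def zero_prod_def by simp
  have Uadd: "(a + c, b + d) \<in> U" if "(a, b) \<in> U" "(c, d) \<in> U" for a b c d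
  proof -
    have "\<forall>x\<in>U. \<forall>y\<in>U. x + y \<in> U" using sg unfolding subgrp_def by simp
    then have "(a, b) + (c, d) \<in> U" using that by blast
    then show ?thesis by simp
  qed
  have inj: "inj \<rho>" using b by (simp add: bij_is_inj)
  define Q where "Q = snd ` U"
  have Qi: "y \<in> Q" if "(x, y) \<in> U" for x y
  proof -
    have "snd (x, y) \<in> snd ` U" using that by (rule imageI)
    then show ?thesis unfolding Q_def by simp
  qed
  have Qe: "\<exists>x. (x, y) \<in> U" if yQ: "y \<in> Q" for y
  proof -
    have "y \<in> snd ` U" using yQ unfolding Q_def .
    then obtain w where "w \<in> U" "y = snd w" by (rule imageE)
    then show ?thesis by (metis prod.collapse)
  qed
  have sgQ: "subgrp Q" unfolding subgrp_def
  proof (intro conjI ballI)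
    show "0 \<in> Q" using Qi[OF U0] .
  next
    fix a b assume "a \<in> Q" "b \<in> Q"
    then obtain a1 b1 where "(a1, a) \<in> U" "(b1, b) \<in> U" using Qe by metis
    then show "a + b \<in> Q" using Uadd Qi by metis
  next
    fix a assume "a \<in> Q" then show "- a \<in> Q" by simp
  qed
  have cQ: "\<rho> (x + q) + \<rho> x \<in> Q" if q: "q \<in> Q" for x q
  proof -
    obtain p where "(p, q) \<in> U" using Qe[OF q] by blast
    from KK[OF this, of 0] have "(q, \<rho> (0 + (p + q)) + \<rho> 0) \<in> U" .
    from KK'[OF this, of x] have "(\<rho> (0 + (p + q)) + \<rho> 0 + (\<rho> (x + q) + \<rho> x), \<rho> (x + q) + \<rho> x) \<in> U" .
    then show ?thesis by (rule Qi)
  qed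
  have Qc: "Q = {0} \<or> Q = UNIV" using hyp_inv[OF b pr sgQ cQ] .
  then show False
  proof
    assume Q0: "Q = {0}"
    have "U \<noteq> {0}" using nt by simp
    then obtain w where w: "w \<in> U" "w \<noteq> 0" using U0 unfolding zero_prod_def by blast
    obtain u1 u2 where wu: "w = (u1, u2)" by (cases w)
    have u: "(u1, u2) \<in> U" using w wu by simp
    have "u2 \<in> Q" using Qi[OF u] .
    then have "u2 = 0" using Q0 by simp
    then have "u1 \<noteq> 0" using w wu by (simp add: zero_prod_def)
    have "\<rho> (0 + u1) + \<rho> 0 \<in> Q" using Qi[OF KK'[OF u, of 0]] .
    then have "\<rho> u1 + \<rho> 0 = 0" using Q0 by simp
    then have "\<rho> u1 = \<rho> 0" by (rule vec_sum0)
    then show False using inj \<open>u1 \<noteq> 0\<close> by (simp add: inj_eq)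
  next
    assume QU: "Q = UNIV"
    define Z where "Z = {u. (u, 0) \<in> U}"
    have sgZ: "subgrp Z" unfolding subgrp_def
    proof (intro conjI ballI)
      show "0 \<in> Z" unfolding Z_def using U0 by simp
    next
      fix a b assume "a \<in> Z" "b \<in> Z"
      then have "(a + b, 0 + 0) \<in> U" unfolding Z_def by (intro Uadd) simp_all
      then show "a + b \<in> Z" unfolding Z_def by simp
    next
      fix a assume "a \<in> Z" then show "- a \<in> Z" by simp
    qed
    have cZ: "\<rho> (x + u) + \<rho> x \<in> Z" if u: "u \<in> Z" for x u
    proof -
      have "(u, 0) \<in> U" using u unfolding Z_def by simp
      from KK[OF this, of x] have "(0, \<rho> (x + u) + \<rho> x) \<in> U" by simp
      from KK'[OF this, of 0] show ?thesis unfolding Z_def by simp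
    qed
    have Zc: "Z = {0} \<or> Z = UNIV" using hyp_inv[OF b pr sgZ cZ] .
    then show False
    proof
      assume ZU: "Z = UNIV"
      have "U = UNIV"
      proof (intro set_eqI iffI)
        fix w :: "(bit ^ 'n) \<times> (bit ^ 'n)"
        obtain a bb where w: "w = (a, bb)" by (cases w)
        have "bb \<in> Q" using QU by simp
        then obtain cc where cc: "(cc, bb) \<in> U" using Qe by blast
        have "cc + a \<in> Z" using ZU by simp
        then have "(cc + a, 0) \<in> U" unfolding Z_def by simp
        from Uadd[OF cc this] have "(cc + (cc + a), bb + 0) \<in> U" .
        then show "w \<in> U" using w by simp
      qed simp
      then show False using nt by simp
    next
      assume Z0: "Z = {0}"
      have aff: "\<rho> (x + d) + \<rho> x = \<rho> d + \<rho> 0" for d x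
      proof -
        have "d \<in> Q" using QU by simp
        then obtain p where "(p, d) \<in> U" using Qe by blast
        from KK'[OF this, of 0] have v: "(d + (\<rho> (0 + p) + \<rho> 0), \<rho> (0 + p) + \<rho> 0) \<in> U" .
        from KK[OF v, of x] have 1: "(\<rho> (0 + p) + \<rho> 0, \<rho> (x + d) + \<rho> x) \<in> U"
          by (simp add: add_ac)
        from KK[OF v, of 0] have 2: "(\<rho> (0 + p) + \<rho> 0, \<rho> (0 + d) + \<rho> 0) \<in> U"
          by (simp add: add_ac)
        from Uadd[OF 1 2] have "(0, (\<rho> (x + d) + \<rho> x) + (\<rho> d + \<rho> 0)) \<in> U" by simp
        from KK'[OF this, of 0] have "(\<rho> (x + d) + \<rho> x) + (\<rho> d + \<rho> 0) \<in> Z"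
          unfolding Z_def by simp
        then have "(\<rho> (x + d) + \<rho> x) + (\<rho> d + \<rho> 0) = 0" using Z0 by simp
        then show ?thesis by (rule vec_sum0)
      qed
      have "\<rho> \<in> AGL" by (rule affine_of_const[OF b aff])
      then show False using na by simp
    qed
  qed
qed

lemma trans_in:
  assumes "T2n \<subseteq> S"
  shows "(\<lambda>x. x + v) \<in> gen_group S"
proof -
  obtain v1 v2 where v: "v = (v1, v2)" by fastforce
  have "(\<lambda>(x, y). (x + v1, y + v2)) \<in> T2n" unfolding T2n_def by blast
  moreover have "(\<lambda>(x, y). (x + v1, y + v2)) = (\<lambda>x. x + v)" unfolding v by auto
  ultimately show ?thesis using assms by (metis gen_gen subsetD)
qed

lemma inv_rho_bar:
  "inv (rho_bar \<rho>) = (\<lambda>(p, q). (p + q + \<rho> p, q + \<rho> p))"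
  by (rule inv_equality) (auto simp: rho_bar_def add_ac)

lemma prim_G:
  fixes \<rho> :: "bit ^ 'n \<Rightarrow> bit ^ 'n"
  assumes b: "bij \<rho>" and na: "\<rho> \<notin> AGL"
    and pr: "primitive_on (gen_group (insert \<rho> Tn)) UNIV"
    and S: "rho_bar \<rho> \<in> S" "T2n \<subseteq> S"
  shows "primitive_on (gen_group S) UNIV"
proof (rule prim_crit)
  fix v show "(\<lambda>x. x + v) \<in> gen_group S" by (rule trans_in[OF S(2)])
next
  fix X :: "((bit ^ 'n) \<times> (bit ^ 'n)) set"
  assume sg: "subgrp X" and all: "\<forall>g\<in>gen_group S. gcompat g X"
  have "gcompat (rho_bar \<rho>) X" using all S(1) by (blast intro: gen_gen)
  moreover have "gcompat (\<lambda>(p, q). (p + q + \<rho> p, q + \<rho> p)) X"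
    using all S(1) gen_inv[of "rho_bar \<rho>" S] by (simp add: inv_rho_bar)
  ultimately show "X = {0} \<or> X = UNIV" by (rule core[OF b na pr sg])
qed

theorem theorem3p3:
  fixes \<rho> \<theta> :: "bit ^ 'n \<Rightarrow> bit ^ 'n"
  assumes "bij \<rho>" and "\<rho> \<notin> AGL"
    and "\<theta> \<in> GL"
    and "primitive_on (gen_group (insert \<rho> Tn)) UNIV"
  shows "primitive_on (gen_group ({rho_bar \<rho>, theta_bar \<theta>} \<union> T2n)) UNIV
       \<and> primitive_on (gen_group (insert (rho_bar \<rho>) T2n)) UNIV"
proof
  show "primitive_on (gen_group ({rho_bar \<rho>, theta_bar \<theta>} \<union> T2n)) UNIV"
    by (rule prim_G[OF assms(1,2,4)]) auto
  show "primitive_on (gen_group (insert (rho_bar \<rho>) T2n)) UNIV"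
    by (rule prim_G[OF assms(1,2,4)]) auto
qed

end
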